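(* Let $P\subseteq\mathbb{R}^2$ be a convex polygon such that $\tau P=P^{\circ}$, and suppose there exist three consecutive vertices $u<v<w$ of $P$ in counterclockwise order such that the line $L_u$ contains both $v$ and $w$. Then $P$ has exactly $6$ vertices.
   Context: $\tau:\mathbb{R}^2\to\mathbb{R}^2$ denotes the $90^\circ$ counterclockwise rotation. The polar of $P$ is $P^{\circ}=\{x\in\mathbb{R}^2: y^\top x\le 1\text{ for all }y\in P\}$. For $u\in\mathbb{R}^2\setminus\{0\}$, $L_u=\{x\in\mathbb{R}^2:(\tau u)^\top x=1\}=\{x\in\mathbb{R}^2:\det(u,x)=1\}$. *)

theory Defs
  imports "HOL-Analysis.Analysis"
begin

definition tau :: "real^2 \<Rightarrow> real^2" where
  "tau x = vector [- (x$2), x$1]"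

definition polar :: "(real^2) set \<Rightarrow> (real^2) set" where
  "polar P = {x. \<forall>y\<in>P. y \<bullet> x \<le> 1}"

definition Lline :: "real^2 \<Rightarrow> (real^2) set" where
  "Lline u = {x. tau u \<bullet> x = 1}"

definition det2 :: "real^2 \<Rightarrow> real^2 \<Rightarrow> real" where
  "det2 a b = a$1 * b$2 - a$2 * b$1"

definition convex_polygon :: "(real^2) set \<Rightarrow> bool" where
  "convex_polygon P \<longleftrightarrow> (\<exists>S. finite S \<and> P = convex hull S) \<and> interior P \<noteq> {}"

definition vertices :: "(real^2) set \<Rightarrow> (real^2) set" where
  "vertices P = {x. x extreme_point_of P}"

text \<open>u, v, w are three consecutive vertices of P in counterclockwise order:
  all are vertices, [u,v] and [v,w] are edges (one-dimensional faces), and the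
  boundary turns left at v.\<close>
definition consecutive_ccw :: "(real^2) set \<Rightarrow> real^2 \<Rightarrow> real^2 \<Rightarrow> real^2 \<Rightarrow> bool" where
  "consecutive_ccw P u v w \<longleftrightarrow>
     u \<in> vertices P \<and> v \<in> vertices P \<and> w \<in> vertices P \<and>
     u \<noteq> v \<and> v \<noteq> w \<and> u \<noteq> w \<and>
     closed_segment u v face_of P \<and> closed_segment v w face_of P \<and>
     det2 (v - u) (w - v) > 0"

end

theory Submission
  imports Defs
begin

lemma inner2: "(x::real^2) \<bullet> y = x$1*y$1 + x$2*y$2"
  by (simp add: inner_vec_def sum_2)

lemma tau_inner: "tau x \<bullet> y = det2 x y"
  by (simp add: inner2 tau_def det2_def)

lemma inner_tau: "y \<bullet> tau x = det2 x y"
  by (simp add: inner2 tau_def det2_def)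

lemma tau_inj: "tau x = tau y \<Longrightarrow> x = y"
  by (simp add: tau_def vec_eq_iff forall_2)

lemma det2_swap: "det2 x y = - det2 y x"
  by (simp add: det2_def)

lemma det2_self: "det2 x x = 0"
  by (simp add: det2_def)

lemma det2_lin: "det2 x (a *\<^sub>R y + b *\<^sub>R z) = a * det2 x y + b * det2 x z"
  "det2 (a *\<^sub>R y + b *\<^sub>R z) x = a * det2 y x + b * det2 z x"
  by (simp_all add: det2_def algebra_simps)

lemma det2_simps[simp]: "det2 (x - y) z = det2 x z - det2 y z" "det2 z (x - y) = det2 z x - det2 z y"
  "det2 (-x) z = - det2 x z" "det2 z (-x) = - det2 z x"
  "det2 (a *\<^sub>R x) z = a * det2 x z" "det2 z (a *\<^sub>R x) = a * det2 z x"
  "det2 (x + y) z = det2 x z + det2 y z" "det2 z (x + y) = det2 z x + det2 z y"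
  by (simp_all add: det2_def algebra_simps)

lemma decomp:
  assumes "det2 u v = 1"
  shows "x = (- det2 v x) *\<^sub>R u + (det2 u x) *\<^sub>R v"
proof -
  have "x$1 = x$1 * det2 u v" "x$2 = x$2 * det2 u v" using assms by simp_all
  then show ?thesis by (simp add: vec_eq_iff forall_2 det2_def algebra_simps)
qed

lemma tri:
  assumes "p \<in> C" "p' \<in> C" "0 \<in> C" "convex C" "c1 \<ge> 0" "c2 \<ge> 0" "c1 + c2 \<le> 1"
  shows "c1 *\<^sub>R p + c2 *\<^sub>R p' \<in> C"
proof -
  have "convex hull {p, p', 0} \<subseteq> C" using assms by (simp add: hull_minimal)
  moreover have "c1 *\<^sub>R p + c2 *\<^sub>R p' \<in> convex hull {p, p', 0}"
    unfolding convex_hull_3 using assms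
    by (rule_tac CollectI, rule_tac x=c1 in exI, rule_tac x=c2 in exI, rule_tac x="1-c1-c2" in exI) simp
  ultimately show ?thesis by blast
qed

lemma hexmem:
  fixes u v :: "real^2"
  assumes "\<bar>a\<bar> \<le> 1" "\<bar>b\<bar> \<le> 1" "\<bar>a+b\<bar> \<le> 1"
  shows "a *\<^sub>R u + b *\<^sub>R v \<in> convex hull {u, v, v-u, -u, -v, -(v-u)}"
proof -
  let ?C = "convex hull {u, v, v-u, -u, -v, -(v-u)}"
  have cv: "convex ?C" by simp
  have m: "u \<in> ?C" "v \<in> ?C" "v - u \<in> ?C" "-u \<in> ?C" "-v \<in> ?C" "-(v-u) \<in> ?C"
    by (simp_all add: hull_inc)
  have z: "0 \<in> ?C"
  proof -
    have "(1/2) *\<^sub>R u + (1/2) *\<^sub>R (-u) \<in> ?C"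
      using convexD[OF cv m(1) m(4), of "1/2" "1/2"] by simp
    then show ?thesis by (simp add: algebra_simps)
  qed
  consider "a \<ge> 0" "b \<ge> 0" | "a \<le> 0" "b \<ge> 0" "a + b \<ge> 0" | "a \<le> 0" "b \<ge> 0" "a + b \<le> 0"
    | "a \<le> 0" "b \<le> 0" | "a \<ge> 0" "b \<le> 0" "a + b \<le> 0" | "a \<ge> 0" "b \<le> 0" "a + b \<ge> 0"
    by linarith
  then show ?thesis
  proof cases
    case 1 then show ?thesis using tri[OF m(1) m(2) z cv, of a b] assms by simp
  next
    case 2
    have "(a+b) *\<^sub>R v + (-a) *\<^sub>R (v-u) = a *\<^sub>R u + b *\<^sub>R v" by (simp add: algebra_simps)
    then show ?thesis using tri[OF m(2) m(3) z cv, of "a+b" "-a"] assms 2 by simp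
  next
    case 3
    have "b *\<^sub>R (v-u) + (-(a+b)) *\<^sub>R (-u) = a *\<^sub>R u + b *\<^sub>R v" by (simp add: algebra_simps)
    then show ?thesis using tri[OF m(3) m(4) z cv, of b "-(a+b)"] assms 3 by simp
  next
    case 4
    have "(-a) *\<^sub>R (-u) + (-b) *\<^sub>R (-v) = a *\<^sub>R u + b *\<^sub>R v" by (simp add: algebra_simps)
    then show ?thesis using tri[OF m(4) m(5) z cv, of "-a" "-b"] assms 4 by simp
  next
    case 5
    have "(-(a+b)) *\<^sub>R (-v) + a *\<^sub>R (-(v-u)) = a *\<^sub>R u + b *\<^sub>R v" by (simp add: algebra_simps)
    then show ?thesis using tri[OF m(5) m(6) z cv, of "-(a+b)" a] assms 5 by simp
  next
    case 6
    have "(-b) *\<^sub>R (-(v-u)) + (a+b) *\<^sub>R u = a *\<^sub>R u + b *\<^sub>R v" by (simp add: algebra_simps)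
    then show ?thesis using tri[OF m(6) m(1) z cv, of "-b" "a+b"] assms 6 by simp
  qed
qed

lemma neg_extreme:
  fixes P :: "(real^2) set"
  assumes "x extreme_point_of P" "\<And>y. y \<in> P \<Longrightarrow> -y \<in> P"
  shows "(-x) extreme_point_of P"
proof -
  have lin: "linear (uminus :: real^2 \<Rightarrow> real^2)" "inj (uminus :: real^2 \<Rightarrow> real^2)"
    by (auto simp: linear_uminus inj_def)
  show ?thesis
  unfolding extreme_point_of_def
  proof (intro conjI ballI)
    show "-x \<in> P" using assms extreme_point_of_def by blast
    fix a b assume ab: "a \<in> P" "b \<in> P"
    show "-x \<notin> open_segment a b"
    proof
      assume "-x \<in> open_segment a b"
      then have "x \<in> uminus ` open_segment a b" by (metis image_eqI minus_minus)
      then have "x \<in> open_segment (-a) (-b)" using open_segment_linear_image[OF lin, of a b] by simp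
      then show False using assms ab extreme_point_of_def by blast
    qed
  qed
qed

theorem proposition6:
  fixes P :: "(real^2) set" and u v w :: "real^2"
  assumes "convex_polygon P"
    and "tau ` P = polar P"
    and "consecutive_ccw P u v w"
    and "v \<in> Lline u" and "w \<in> Lline u"
  shows "card (vertices P) = 6"
proof -
  obtain S where S: "finite S" "P = convex hull S" and intP: "interior P \<noteq> {}"
    using assms(1) convex_polygon_def by blast
  have cvx: "convex P" using S by simp
  have cc: "u extreme_point_of P" "v extreme_point_of P" "w extreme_point_of P"
    "closed_segment u v face_of P" "det2 (v - u) (w - v) > 0"
    using assms(3) unfolding consecutive_ccw_def vertices_def by auto
  have uP: "u \<in> P" and vP: "v \<in> P" and wP: "w \<in> P"
    using cc extreme_point_of_def by blast+
  have A: "det2 x y \<le> 1" if "x \<in> P" "y \<in> P" for x y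
  proof -
    have "tau x \<in> polar P" using assms(2) that by blast
    then show ?thesis using that(2) by (simp add: polar_def inner_tau)
  qed
  have negP: "-x \<in> P" if "x \<in> P" for x
  proof -
    have "tau (-x) \<in> polar P"
      unfolding polar_def using A[OF _ that] by (simp add: inner_tau det2_swap[of x])
    then obtain z where "z \<in> P" "tau (-x) = tau z" using assms(2) by (metis imageE)
    then show ?thesis using tau_inj by metis
  qed
  have uv: "det2 u v = 1" and uw: "det2 u w = 1"
    using assms(4,5) by (simp_all add: Lline_def tau_inner)
  have u0: "u \<noteq> 0" using uv by (auto simp: det2_def)
  have pol: "polyhedron P" using S polytope_def polytope_imp_polyhedron by blast
  have ex: "closed_segment u v exposed_face_of P"
    using exposed_face_of_polyhedron[OF pol] cc(4) by blast
  have ne: "closed_segment u v \<noteq> P"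
    using intP interior_closed_segment[of u v] by auto
  obtain a b where ab: "a \<noteq> 0" "P \<subseteq> {x. a \<bullet> x \<le> b}" "closed_segment u v = P \<inter> {x. a \<bullet> x = b}"
  proof -
    have "closed_segment u v = {} \<or> closed_segment u v = P \<or> (\<exists>a b. a \<noteq> 0 \<and> P \<subseteq> {x. a \<bullet> x \<le> b} \<and> closed_segment u v = P \<inter> {x. a \<bullet> x = b})"
      using ex exposed_face_of by blast
    moreover have "closed_segment u v \<noteq> {}" by simp
    ultimately show ?thesis using ne that by blast
  qed
  have au: "a \<bullet> u = b" and av: "a \<bullet> v = b" using ab(3) by auto
  have b0: "b > 0"
  proof (rule ccontr)
    assume "\<not> b > 0"
    have "b \<ge> 0" using negP[OF uP] ab(2) au by force
    then have "b = 0" using \<open>\<not> b > 0\<close> by simp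
    have "P \<subseteq> {x. a \<bullet> x = b}"
    proof
      fix x assume "x \<in> P"
      then have "a \<bullet> x \<le> b" "a \<bullet> (-x) \<le> b" using ab(2) negP by blast+
      then show "x \<in> {x. a \<bullet> x = b}" using \<open>b = 0\<close> by simp
    qed
    then show False using ne ab(3) by blast
  qed
  have "(inverse b *\<^sub>R a) \<in> polar P"
    unfolding polar_def
  proof (intro CollectI ballI)
    fix y assume "y \<in> P"
    then have "a \<bullet> y \<le> b" using ab(2) by blast
    then show "y \<bullet> (inverse b *\<^sub>R a) \<le> 1" using b0
      by (simp add: inner_commute field_simps)
  qed
  then obtain q where qP: "q \<in> P" and qa: "tau q = inverse b *\<^sub>R a" using assms(2) by (metis imageE)
  have qu: "det2 q u = 1" and qv: "det2 q v = 1"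
  proof -
    have "det2 q u = (inverse b *\<^sub>R a) \<bullet> u" "det2 q v = (inverse b *\<^sub>R a) \<bullet> v"
      using qa tau_inner by metis+
    then show "det2 q u = 1" "det2 q v = 1" using au av b0 by simp_all
  qed
  have "q = u - v"
  proof -
    have "q = (- det2 v q) *\<^sub>R u + (det2 u q) *\<^sub>R v" by (rule decomp[OF uv])
    also have "\<dots> = u - v" using qu qv det2_swap[of q u] det2_swap[of q v] by simp
    finally show ?thesis .
  qed
  then have vuP: "v - u \<in> P" using negP[OF qP] by simp
  define t where "t = - det2 v w"
  have wt: "w = v + t *\<^sub>R u"
    using decomp[OF uv, of w] uw by (simp add: t_def algebra_simps)
  have tneg: "t < 0"
  proof -
    have "w - v = t *\<^sub>R u" using wt by simp
    then have "det2 (v - u) (w - v) = t * (det2 v u - det2 u u)" by simp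
    also have "\<dots> = - t" using det2_self[of u] det2_swap[of v u] uv by simp
    finally show ?thesis using cc(5) by simp
  qed
  have tge: "t \<ge> -1" using A[OF vP wP] t_def by simp
  have t1: "t = -1"
  proof (rule ccontr)
    assume "t \<noteq> -1"
    then have "w \<in> open_segment v (v - u)"
    proof -
      have "w = (1 - (-t)) *\<^sub>R v + (-t) *\<^sub>R (v - u)" by (simp add: wt algebra_simps)
      moreover have "v \<noteq> v - u" using u0 by simp
      moreover have "0 < -t" "-t < 1" using tneg tge \<open>t \<noteq> -1\<close> by auto
      ultimately show ?thesis unfolding in_segment by blast
    qed
    then show False using cc(3) vP vuP extreme_point_of_def by blast
  qed
  have ww: "w = v - u" using wt t1 by simp
  define H where "H = {u, v, v-u, -u, -v, -(v-u)}"
  have HP: "H \<subseteq> P" using uP vP vuP negP[OF uP] negP[OF vP] negP[OF vuP] unfolding H_def by auto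
  have PH: "P = convex hull H"
  proof
    show "convex hull H \<subseteq> P" using HP cvx by (simp add: hull_minimal)
    show "P \<subseteq> convex hull H"
    proof
      fix x assume xP: "x \<in> P"
      have "det2 v x \<le> 1" "det2 x v \<le> 1" "det2 u x \<le> 1" "det2 x u \<le> 1"
        "det2 (v-u) x \<le> 1" "det2 x (v-u) \<le> 1"
        using A xP vP uP vuP by blast+
      then have "\<bar>- det2 v x\<bar> \<le> 1" "\<bar>det2 u x\<bar> \<le> 1" "\<bar>- det2 v x + det2 u x\<bar> \<le> 1"
        using det2_swap[of x v] det2_swap[of x u] by auto
      from hexmem[OF this, of u v] show "x \<in> convex hull H"
        using decomp[OF uv, of x] unfolding H_def by simp
    qed
  qed
  have "vertices P = H"
  proof
    show "vertices P \<subseteq> H" unfolding vertices_def PH using extreme_point_of_convex_hull by blast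
    have "(-u) extreme_point_of P" "(-v) extreme_point_of P" "(-(v-u)) extreme_point_of P"
      using neg_extreme[OF cc(1) negP] neg_extreme[OF cc(2) negP] neg_extreme[OF cc(3) negP] ww
      by auto
    then show "H \<subseteq> vertices P" using cc ww unfolding H_def vertices_def by auto
  qed
  moreover have "card H = 6"
  proof -
    have d: "x \<noteq> y" if "det2 x y \<noteq> 0" for x y :: "real^2" using that det2_self by metis
    have n: "x \<noteq> -x" if "x \<noteq> 0" for x :: "real^2" using that by (auto simp: vec_eq_iff)
    have v0: "v \<noteq> 0" using uv by (auto simp: det2_def)
    have vu0: "v - u \<noteq> 0" using uv by (auto simp: det2_def)
    have vu: "det2 v u = -1" using uv det2_swap[of v u] by simp
    show ?thesis unfolding H_def
      using d[of u v] d[of u "v-u"] d[of u "-v"] d[of u "-(v-u)"]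
        d[of v "v-u"] d[of v "-u"] d[of v "-(v-u)"]
        d[of "v-u" "-u"] d[of "v-u" "-v"] d[of "-u" "-v"] d[of "-u" "-(v-u)"] d[of "-v" "-(v-u)"]
        n[OF u0] n[OF v0] n[OF vu0] uv vu det2_self[of u] det2_self[of v]
      by (simp add: card_insert_if)
  qed
  ultimately show ?thesis by simp
qed

end
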